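(* Let \(a,b,c\) be positive integers and let \(m\) be a positive integer that is not a perfect square. Then \((a\sqrt m,\,b+c\sqrt m)\) spans \(1\) in \(\mathbb Z[\sqrt m]\) if and only if \((am,\,b^2-c^2m)\) spans \(1\) in \(\mathbb Z\), i.e. \(\gcd(am,b^2-c^2m)=1\).
   Context: \(\mathbb Z[\sqrt m]=\{u+v\sqrt m\mid u,v\in\mathbb Z\}\). For a commutative ring \(R\) with \(1\), a pair \((\alpha_1,\alpha_2)\) spans \(1\) in \(R\) if \(\lambda_1\alpha_1+\lambda_2\alpha_2=1\) for some \(\lambda_1,\lambda_2\in R\). *)

theory Defs
  imports Main
begin

text \<open>Elements u + v sqrt m of Z[sqrt m] are represented by integer pairs (u, v);
  the representation is faithful since m is not a perfect square.\<close>

definition zsqrt_mult :: "int \<Rightarrow> int \<times> int \<Rightarrow> int \<times> int \<Rightarrow> int \<times> int" where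
  "zsqrt_mult m x y = (fst x * fst y + m * snd x * snd y, fst x * snd y + snd x * fst y)"

definition zsqrt_add :: "int \<times> int \<Rightarrow> int \<times> int \<Rightarrow> int \<times> int" where
  "zsqrt_add x y = (fst x + fst y, snd x + snd y)"

definition spans_one_zsqrt :: "int \<Rightarrow> int \<times> int \<Rightarrow> int \<times> int \<Rightarrow> bool" where
  "spans_one_zsqrt m \<alpha>1 \<alpha>2 \<longleftrightarrow>
     (\<exists>l1 l2. zsqrt_add (zsqrt_mult m l1 \<alpha>1) (zsqrt_mult m l2 \<alpha>2) = (1, 0))"

definition spans_one_int :: "int \<Rightarrow> int \<Rightarrow> bool" where
  "spans_one_int x y \<longleftrightarrow> (\<exists>l1 l2. l1 * x + l2 * y = 1)"

end

theory Submission
  imports Defs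
begin

theorem lemma7:
  fixes a b c m :: int
  assumes "a > 0" and "b > 0" and "c > 0" and "m > 0"
    and "\<not> (\<exists>k::int. m = k ^ 2)"
  shows "spans_one_zsqrt m (0, a) (b, c) \<longleftrightarrow> spans_one_int (a * m) (b ^ 2 - c ^ 2 * m)"
proof
  assume "spans_one_zsqrt m (0, a) (b, c)"
  then obtain x1 y1 x2 y2 where
    P: "m * a * y1 + b * x2 + m * c * y2 = 1" and Q: "a * x1 + c * x2 + b * y2 = 0"
  proof -
    from \<open>spans_one_zsqrt m (0, a) (b, c)\<close> obtain l1 l2 where
      "zsqrt_add (zsqrt_mult m l1 (0, a)) (zsqrt_mult m l2 (b, c)) = (1, 0)"
      unfolding spans_one_zsqrt_def by blast
    then have "m * a * snd l1 + b * fst l2 + m * c * snd l2 = 1"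
      "a * fst l1 + c * fst l2 + b * snd l2 = 0"
      unfolding zsqrt_add_def zsqrt_mult_def by (auto simp: algebra_simps)
    then show ?thesis using that by blast
  qed
  define u where "u = b * x2 + m * c * y2"
  define v where "v = c * x2 + b * y2"
  define X where "X = a * m * y1^2 - a * x1^2 + 2 * (y1 * u - x1 * v)"
  define Y where "Y = x2^2 - m * y2^2"
  have "X * (a * m) + Y * (b ^ 2 - c ^ 2 * m)
        = (m * a * y1 + b * x2 + m * c * y2)^2 - m * (a * x1 + c * x2 + b * y2)^2"
    unfolding X_def Y_def u_def v_def by (simp add: algebra_simps power2_eq_square)
  also have "\<dots> = 1" using P Q by simp
  finally show "spans_one_int (a * m) (b ^ 2 - c ^ 2 * m)"
    unfolding spans_one_int_def by blast
next
  assume "spans_one_int (a * m) (b ^ 2 - c ^ 2 * m)"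
  then obtain l1 l2 where h: "l1 * (a * m) + l2 * (b ^ 2 - c ^ 2 * m) = 1"
    unfolding spans_one_int_def by blast
  have "zsqrt_add (zsqrt_mult m (0, l1) (0, a)) (zsqrt_mult m (l2 * b, - l2 * c) (b, c)) = (1, 0)"
    using h unfolding zsqrt_add_def zsqrt_mult_def
    by (simp add: algebra_simps power2_eq_square)
  then show "spans_one_zsqrt m (0, a) (b, c)"
    unfolding spans_one_zsqrt_def by blast
qed

end
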